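(* In a partial synchronized communication system whose communication graph is an $n\times m$ grid communication graph, two starving robots can never be (at the same time) on circles lying in the same row.
   Context: Model. A system consists of pairwise disjoint unit circles in the plane (trajectories) and a communication range $r>0$. Its communication graph $G$ has the circles as vertices, two adjacent iff the distance between their centres is at most $2+r$. Positions on a circle are angles (mod $2\pi$). For an edge $(i,j)$, the link position $\phi_{ij}$ is the angle of the point of $C_i$ closest to $C_j$. A schedule $F=(f,g)$ assigns each circle a starting angle $f(C_i)$ and direction $g(C_i)\in\{1,-1\}$; a robot following it on $C_i$ is at $f(C_i)+g(C_i)2\pi t$ at time $t$. $F$ is a synchronization schedule if $g(C_i)=-g(C_j)$ for adjacent circles and robots following $F$ on adjacent $C_i,C_j$ are at $\phi_{ij},\phi_{ji}$ at exactly the same times. A synchronized communication system (SCS) consists of robots, initially one per circle, following a synchronization schedule, with the switching rule: when a robot on $C_i$ reaches $\phi_{ij}$ and $C_j$ is empty, it instantly passes to $C_j$ and follows the schedule of $C_j$; if $C_j$ has a robot, they meet and each stays on its circle. A partial SCS arises by letting some robots leave (possibly at different times); remaining robots never leave. A surviving robot $u$ starves if every time $u$ arrives at a link position $\phi_{ij}$ of its current circle $C_i$, the circle $C_j$ is empty. Grid. The $n\times m$ grid communication graph consists of $nm$ unit circles, circle $(i,j)$ in row $i$ (rows horizontal) and column $j$ (columns vertical), centres on a square lattice, circle $(i,j)$ adjacent exactly to the existing circles $(i\pm1,j)$, $(i,j\pm1)$. *)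

theory Defs
  imports Complex_Main
begin

text \<open>Trajectories are unit circles indexed by a vertex set V;
  circle a has centre c a (a point of the plane, represented as a complex number).
  Angles are represented through the point they determine on the circle:
  the point at angle theta on circle a is c a + cis theta.\<close>

text \<open>The point of the unit circle centred at ci closest to the unit circle centred at cj
  (the point whose angle is the link position).\<close>
definition link_pt :: "complex \<Rightarrow> complex \<Rightarrow> complex" where
  "link_pt ci cj = ci + sgn (cj - ci)"

definition comm_adj :: "('v \<Rightarrow> complex) \<Rightarrow> real \<Rightarrow> 'v set \<Rightarrow> 'v \<Rightarrow> 'v \<Rightarrow> bool" where
  "comm_adj c r V a b \<longleftrightarrow> a \<in> V \<and> b \<in> V \<and> a \<noteq> b \<and> cmod (c a - c b) \<le> 2 + r"

definition sched_pt ::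
  "('v \<Rightarrow> complex) \<Rightarrow> ('v \<Rightarrow> real) \<Rightarrow> ('v \<Rightarrow> int) \<Rightarrow> 'v \<Rightarrow> real \<Rightarrow> complex" where
  "sched_pt c f g a t = c a + cis (f a + of_int (g a) * 2 * pi * t)"

definition sync_schedule ::
  "('v \<Rightarrow> complex) \<Rightarrow> real \<Rightarrow> 'v set \<Rightarrow> ('v \<Rightarrow> real) \<Rightarrow> ('v \<Rightarrow> int) \<Rightarrow> bool" where
  "sync_schedule c r V f g \<longleftrightarrow>
     (\<forall>a\<in>V. g a = 1 \<or> g a = -1) \<and>
     (\<forall>a b. comm_adj c r V a b \<longrightarrow>
        g a = - g b \<and>
        (\<forall>t::real. sched_pt c f g a t = link_pt (c a) (c b) \<longleftrightarrow>
                   sched_pt c f g b t = link_pt (c b) (c a)))"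

definition occ_pre :: "'v set \<Rightarrow> ('v \<Rightarrow> real \<Rightarrow> 'v option) \<Rightarrow> real \<Rightarrow> 'v \<Rightarrow> bool" where
  "occ_pre V pre t b \<longleftrightarrow> (\<exists>w\<in>V. pre w t = Some b)"

text \<open>Robots are named by their initial circle (one robot per
  circle initially). loc u t is the circle of robot u at time t (None = robot has left),
  right-continuous; pre u t is its circle just before time t (left limit), and for t = 0
  the initial circle. At every time t the switching rule is applied w.r.t. the
  configuration just before t; any robot may leave at any time and never returns.\<close>
definition partial_scs_run ::
  "('v \<Rightarrow> complex) \<Rightarrow> real \<Rightarrow> 'v set \<Rightarrow> ('v \<Rightarrow> real) \<Rightarrow> ('v \<Rightarrow> int)
     \<Rightarrow> ('v \<Rightarrow> real \<Rightarrow> 'v option) \<Rightarrow> ('v \<Rightarrow> real \<Rightarrow> 'v option) \<Rightarrow> bool" where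
  "partial_scs_run c r V f g loc pre \<longleftrightarrow>
     sync_schedule c r V f g \<and>
     (\<forall>u\<in>V. pre u 0 = Some u) \<and>
     (\<forall>u\<in>V. \<forall>t\<ge>0.
        (\<exists>\<epsilon>>0. \<forall>s. t < s \<and> s < t + \<epsilon> \<longrightarrow> loc u s = loc u t) \<and>
        (t > 0 \<longrightarrow> (\<exists>\<epsilon>>0. \<forall>s. t - \<epsilon> < s \<and> s < t \<longrightarrow> loc u s = pre u t)) \<and>
        (pre u t = None \<longrightarrow> loc u t = None) \<and>
        (\<forall>a. pre u t = Some a \<longrightarrow>
           loc u t = None \<or>
           (\<exists>b. comm_adj c r V a b \<and> sched_pt c f g a t = link_pt (c a) (c b) \<and>
                \<not> occ_pre V pre t b \<and> loc u t = Some b) \<or>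
           (loc u t = Some a \<and>
              \<not> (\<exists>b. comm_adj c r V a b \<and> sched_pt c f g a t = link_pt (c a) (c b) \<and>
                     \<not> occ_pre V pre t b))))"

definition surviving :: "('v \<Rightarrow> real \<Rightarrow> 'v option) \<Rightarrow> 'v \<Rightarrow> bool" where
  "surviving loc u \<longleftrightarrow> (\<forall>t\<ge>0. loc u t \<noteq> None)"

definition starves ::
  "('v \<Rightarrow> complex) \<Rightarrow> real \<Rightarrow> 'v set \<Rightarrow> ('v \<Rightarrow> real) \<Rightarrow> ('v \<Rightarrow> int)
     \<Rightarrow> ('v \<Rightarrow> real \<Rightarrow> 'v option) \<Rightarrow> ('v \<Rightarrow> real \<Rightarrow> 'v option) \<Rightarrow> 'v \<Rightarrow> bool" where
  "starves c r V f g loc pre u \<longleftrightarrow>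
     surviving loc u \<and>
     (\<forall>t\<ge>0. \<forall>a b. pre u t = Some a \<and> comm_adj c r V a b \<and>
                    sched_pt c f g a t = link_pt (c a) (c b) \<longrightarrow> \<not> occ_pre V pre t b)"

text \<open>Grid: circle (i,j) in row i and column j.\<close>
definition grid_cells :: "nat \<Rightarrow> nat \<Rightarrow> (nat \<times> nat) set" where
  "grid_cells n m = {0..<n} \<times> {0..<m}"

definition grid_adj :: "nat \<times> nat \<Rightarrow> nat \<times> nat \<Rightarrow> bool" where
  "grid_adj p q \<longleftrightarrow>
     (fst p = fst q \<and> (snd q = snd p + 1 \<or> snd p = snd q + 1)) \<or>
     (snd p = snd q \<and> (fst q = fst p + 1 \<or> fst p = fst q + 1))"

definition grid_system :: "nat \<Rightarrow> nat \<Rightarrow> real \<Rightarrow> (nat \<times> nat \<Rightarrow> complex) \<Rightarrow> bool" where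
  "grid_system n m r c \<longleftrightarrow>
     r > 0 \<and>
     (\<exists>c0 e \<sigma>. e \<noteq> 0 \<and> (\<sigma> = 1 \<or> \<sigma> = -1) \<and>
        (\<forall>i j. c (i, j) = c0 + of_nat j * e + of_nat i * (\<sigma> * \<i> * e))) \<and>
     (\<forall>p\<in>grid_cells n m. \<forall>q\<in>grid_cells n m. p \<noteq> q \<longrightarrow> cmod (c p - c q) > 2) \<and>
     (\<forall>p q. comm_adj c r (grid_cells n m) p q \<longleftrightarrow>
            p \<in> grid_cells n m \<and> q \<in> grid_cells n m \<and> grid_adj p q)"

end

theory Submission
  imports Defs
begin


definition wstep :: "nat \<Rightarrow> int \<Rightarrow> nat \<Rightarrow> nat" where
 "wstep N q x = (if even q then (if even (int x + q div 2) then (if x+1 < N then x+1 else x)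
     else (if 0 < x then x-1 else x)) else x)"

lemma wstep_lt: "x < N \<Longrightarrow> wstep N q x < N" by (auto simp: wstep_def)

lemma wstep_uminus: "wstep N (-q) x = wstep N q x"
proof (cases "even q")
  case True
  then obtain r where "q = 2*r" by auto
  moreover have "(- (2*r)) div 2 = - r" by simp
  moreover have "even (int x + - r) = even (int x + r)" by presburger
  ultimately show ?thesis by (simp add: wstep_def)
next
  case False then show ?thesis by (simp add: wstep_def)
qed

definition hh :: "int \<Rightarrow> nat \<Rightarrow> int" where "hh Q0 k = (Q0 + int k + 1) div 2"
definition sv :: "nat \<Rightarrow> int \<Rightarrow> nat \<Rightarrow> int" where
 "sv N h x = (if even (int x + h) then int x else 2*int N - 1 - int x)"

lemma sv_step_exact:
  assumes "x < N"
  shows "sv N (hh Q0 (Suc k)) (wstep N (Q0 + int k) x) =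
     (let v = sv N (hh Q0 k) x + (hh Q0 (Suc k) - hh Q0 k) in if v = 2*int N then 0 else v)"
proof (cases "even (Q0 + int k)")
  case True
  then obtain r where r: "Q0 + int k = 2*r" by (metis evenE)
  have h1: "hh Q0 k = r" "hh Q0 (Suc k) = r + 1" unfolding hh_def using r by auto
  show ?thesis using assms unfolding h1 sv_def wstep_def r Let_def by auto presburger+
next
  case False
  then obtain r where r: "Q0 + int k = 2*r+1" by (metis oddE)
  have h1: "hh Q0 k = r+1" "hh Q0 (Suc k) = r + 1" unfolding hh_def using r by auto
  show ?thesis using assms unfolding h1 sv_def wstep_def r Let_def by auto
qed

lemma sv_range: "x < N \<Longrightarrow> 0 \<le> sv N h x \<and> sv N h x < 2 * int N"
  by (auto simp: sv_def)

lemma sv_inj: "x < N \<Longrightarrow> y < N \<Longrightarrow> sv N h x = sv N h y \<Longrightarrow> x = y"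
  by (auto simp: sv_def split: if_splits)

lemma sv_par: "even (sv N h x + h)"
  by (auto simp: sv_def)

lemma walker_inv:
  assumes X: "\<And>k. X (Suc k) = wstep N (Q0 + int k) (X k)" and X0: "X 0 < N"
  shows "X k < N \<and> sv N (hh Q0 k) (X k) mod (2 * int N) =
           (sv N (hh Q0 0) (X 0) + hh Q0 k - hh Q0 0) mod (2 * int N)"
proof (induction k)
  case 0 then show ?case using X0 by simp
next
  case (Suc k)
  then have lt: "X k < N" and IH: "sv N (hh Q0 k) (X k) mod (2 * int N) =
           (sv N (hh Q0 0) (X 0) + hh Q0 k - hh Q0 0) mod (2 * int N)" by auto
  define v where "v = sv N (hh Q0 k) (X k) + (hh Q0 (Suc k) - hh Q0 k)"
  have e: "sv N (hh Q0 (Suc k)) (X (Suc k)) = (if v = 2*int N then 0 else v)"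
    unfolding X v_def using sv_step_exact[OF lt] by (simp add: Let_def)
  have "sv N (hh Q0 (Suc k)) (X (Suc k)) mod (2 * int N) = v mod (2 * int N)"
    unfolding e by auto
  also have "\<dots> = (sv N (hh Q0 k) (X k) mod (2 * int N) + (hh Q0 (Suc k) - hh Q0 k)) mod (2 * int N)"
    unfolding v_def by (simp add: mod_add_left_eq)
  also have "\<dots> = (sv N (hh Q0 0) (X 0) + hh Q0 k - hh Q0 0 + (hh Q0 (Suc k) - hh Q0 k)) mod (2 * int N)"
    unfolding IH by (simp add: mod_add_left_eq)
  also have "\<dots> = (sv N (hh Q0 0) (X 0) + hh Q0 (Suc k) - hh Q0 0) mod (2 * int N)"
    by (simp add: algebra_simps)
  finally show ?case using wstep_lt[OF lt] X by simp
qed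

lemma walker_distinct:
  assumes X: "\<And>k. X (Suc k) = wstep N (Q0 + int k) (X k)" and X0: "X 0 < N"
    and Y: "\<And>k. Y (Suc k) = wstep N (Q0 + int k) (Y k)" and Y0: "Y 0 < N"
    and eq: "X k = Y k"
  shows "X 0 = Y 0"
proof -
  have a: "sv N (hh Q0 k) (X k) mod (2 * int N) = (sv N (hh Q0 0) (X 0) + hh Q0 k - hh Q0 0) mod (2 * int N)"
    using walker_inv[OF X X0] by blast
  have b: "sv N (hh Q0 k) (Y k) mod (2 * int N) = (sv N (hh Q0 0) (Y 0) + hh Q0 k - hh Q0 0) mod (2 * int N)"
    using walker_inv[OF Y Y0] by blast
  have "(sv N (hh Q0 0) (X 0) + (hh Q0 k - hh Q0 0)) mod (2 * int N) = (sv N (hh Q0 0) (Y 0) + (hh Q0 k - hh Q0 0)) mod (2 * int N)"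
    using a b eq by (simp add: algebra_simps)
  then have "sv N (hh Q0 0) (X 0) mod (2 * int N) = sv N (hh Q0 0) (Y 0) mod (2 * int N)"
    by (metis mod_diff_left_eq add_diff_cancel)
  then have "sv N (hh Q0 0) (X 0) = sv N (hh Q0 0) (Y 0)"
    using sv_range[OF X0] sv_range[OF Y0] by simp
  then show ?thesis using sv_inj X0 Y0 by blast
qed

lemma mod_two_cases:
  fixes s N :: int
  assumes "N \<ge> 2" "0 \<le> s" "s \<le> 4*N - 2" "s mod (2*N) = (2*N - 2) mod (2*N)"
  shows "s = 2*N - 2 \<or> s = 4*N - 2"
proof -
  have m: "(2*N - 2) mod (2*N) = 2*N - 2" by (rule mod_pos_pos_trivial) (use assms(1) in auto)
  have d: "s = 2*N * (s div (2*N)) + s mod (2*N)" by simp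
  have "s div (2*N) \<ge> 0" using assms by (simp add: pos_imp_zdiv_nonneg_iff)
  moreover have "s div (2*N) < 2"
  proof (rule ccontr)
    assume "\<not> s div (2*N) < 2"
    then have "2*N * (s div (2*N)) \<ge> 2*N*2" using assms(1) by (intro mult_left_mono) auto
    then show False using d m assms by linarith
  qed
  ultimately have "s div (2*N) = 0 \<or> s div (2*N) = 1" by linarith
  then show ?thesis using d m assms(4) by auto
qed

lemma walker_meet:
  assumes X: "\<And>k. X (Suc k) = wstep N (Q0 + int k) (X k)" and X0: "X 0 < N"
    and Y: "\<And>k. Y (Suc k) = wstep N (Q0 + int k) (Y k)" and Y0: "Y 0 < N"
    and ne: "X 0 \<noteq> Y 0"
  shows "\<exists>k. even (Q0 + int k) \<and>
     ((even (int (X k) + (Q0 + int k) div 2) \<and> Y k = X k + 1) \<or>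
      (even (int (Y k) + (Q0 + int k) div 2) \<and> X k = Y k + 1))"
proof -
  define A where "A = sv N (hh Q0 0) (X 0)"
  define B where "B = sv N (hh Q0 0) (Y 0)"
  define h0 where "h0 = hh Q0 0"
  have "even (A + h0)" "even (B + h0)" unfolding A_def B_def h0_def using sv_par by auto
  then have "even (A + B - 2*h0)" by presburger
  then obtain R where R: "A + B - 2*h0 = 2*R" by (metis evenE)
  have Npos: "N > 0" using X0 by simp
  define M where "M = (-1 - R) mod int N + int N * \<bar>Q0\<bar>"
  have "int N * \<bar>Q0\<bar> \<ge> \<bar>Q0\<bar>" using Npos by (simp add: mult_le_cancel_right1)
  moreover have "(-1 - R) mod int N \<ge> 0" using Npos by simp
  moreover have "\<bar>Q0\<bar> \<ge> Q0" by simp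
  moreover have "\<And>a b. a \<ge> 0 \<Longrightarrow> b \<ge> \<bar>Q0\<bar> \<Longrightarrow> 2*(a+b) - Q0 \<ge> 0" by arith
  ultimately have M0: "2*M - Q0 \<ge> 0" unfolding M_def by blast
  define k where "k = nat (2*M - Q0)"
  have qk: "Q0 + int k = 2*M" unfolding k_def using M0 by simp
  have hk: "hh Q0 k = M" unfolding hh_def using qk by simp
  have divk: "(Q0 + int k) div 2 = M" using qk by simp
  have ia: "X k < N \<and> sv N M (X k) mod (2 * int N) = (A + M - h0) mod (2 * int N)"
    using walker_inv[OF X X0, of k] unfolding A_def h0_def hk by simp
  have ib: "Y k < N \<and> sv N M (Y k) mod (2 * int N) = (B + M - h0) mod (2 * int N)"
    using walker_inv[OF Y Y0, of k] unfolding B_def h0_def hk by simp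
  have nek: "X k \<noteq> Y k" using walker_distinct[OF X X0 Y Y0] ne by blast
  have "(sv N M (X k) + sv N M (Y k)) mod (2 * int N) = ((A + M - h0) + (B + M - h0)) mod (2 * int N)"
    using ia ib by (metis mod_add_eq)
  also have "(A + M - h0) + (B + M - h0) = 2*(M + R)" using R by simp
  also have "2*(M+R) mod (2 * int N) = (2 * int N - 2) mod (2 * int N)"
  proof -
    have "M + R = ((-1 - R) mod int N + R) + int N * \<bar>Q0\<bar>" unfolding M_def by simp
    then have "(M + R) mod int N = ((-1 - R) mod int N + R) mod int N" by (simp only: mod_mult_self2)
    also have "\<dots> = (-1) mod int N" by (metis diff_add_cancel mod_add_left_eq)
    finally have "(M + R) mod int N = (int N - 1) mod int N"
      by (metis add.commute diff_add_cancel minus_add_cancel mod_add_self2 uminus_add_conv_diff)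
    then have "2 * ((M+R) mod int N) = 2 * ((int N - 1) mod int N)" by simp
    then have "(2*(M+R)) mod (2*int N) = (2*(int N - 1)) mod (2*int N)"
      by (simp only: mod_mult_mult1)
    then show ?thesis by (simp add: algebra_simps)
  qed
  finally have sm: "(sv N M (X k) + sv N M (Y k)) mod (2 * int N) = (2 * int N - 2) mod (2 * int N)" .
  have N2: "int N \<ge> 2"
  proof (rule ccontr)
    assume "\<not> int N \<ge> 2" then have "N = 1" using Npos by simp
    then show False using ia ib nek by simp
  qed
  have rx: "0 \<le> sv N M (X k) \<and> sv N M (X k) < 2 * int N" using sv_range ia by blast
  have ry: "0 \<le> sv N M (Y k) \<and> sv N M (Y k) < 2 * int N" using sv_range ib by blast
  have cs: "sv N M (X k) + sv N M (Y k) = 2 * int N - 2 \<or> sv N M (X k) + sv N M (Y k) = 4 * int N - 2"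
    using mod_two_cases[OF N2 _ _ sm] rx ry by linarith
  have xl: "X k < N" and yl: "Y k < N" using ia ib by auto
  have "(even (int (X k) + M) \<and> Y k = X k + 1) \<or> (even (int (Y k) + M) \<and> X k = Y k + 1)"
  proof (cases "even (int (X k) + M)"; cases "even (int (Y k) + M)")
    assume a: "even (int (X k) + M)" "even (int (Y k) + M)"
    then have "int (X k) + int (Y k) = 2 * int N - 2 \<or> int (X k) + int (Y k) = 4 * int N - 2"
      using cs by (simp add: sv_def)
    moreover have "int (X k) \<noteq> int (Y k)" using nek by simp
    ultimately have False using xl yl by linarith
    then show ?thesis ..
  next
    assume a: "even (int (X k) + M)" "odd (int (Y k) + M)"
    then have "int (X k) + (2 * int N - 1 - int (Y k)) = 2 * int N - 2 \<or> int (X k) + (2 * int N - 1 - int (Y k)) = 4 * int N - 2"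
      using cs by (simp add: sv_def)
    then have "int (Y k) = int (X k) + 1" using xl yl by linarith
    then have "Y k = X k + 1" by linarith
    then show ?thesis using a(1) by blast
  next
    assume a: "odd (int (X k) + M)" "even (int (Y k) + M)"
    then have "(2 * int N - 1 - int (X k)) + int (Y k) = 2 * int N - 2 \<or> (2 * int N - 1 - int (X k)) + int (Y k) = 4 * int N - 2"
      using cs by (simp add: sv_def)
    then have "int (X k) = int (Y k) + 1" using xl yl by linarith
    then have "X k = Y k + 1" by linarith
    then show ?thesis using a(2) by blast
  next
    assume a: "odd (int (X k) + M)" "odd (int (Y k) + M)"
    then have "(2 * int N - 1 - int (X k)) + (2 * int N - 1 - int (Y k)) = 2 * int N - 2 \<or> (2 * int N - 1 - int (X k)) + (2 * int N - 1 - int (Y k)) = 4 * int N - 2"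
      using cs by (simp add: sv_def)
    moreover have "int (X k) \<noteq> int (Y k)" using nek by simp
    ultimately have False using xl yl by linarith
    then show ?thesis ..
  qed
  moreover have "even (Q0 + int k)" using qk by simp
  ultimately show ?thesis unfolding divk[symmetric] by blast
qed




lemma const_interval:
  fixes L P :: "real \<Rightarrow> 'b"
  assumes right: "\<And>t. a \<le> t \<Longrightarrow> t < b \<Longrightarrow> \<exists>\<epsilon>>0. \<forall>s. t < s \<and> s < t + \<epsilon> \<longrightarrow> L s = L t"
    and left: "\<And>t. a < t \<Longrightarrow> t < b \<Longrightarrow> \<exists>\<epsilon>>0. \<forall>s. t - \<epsilon> < s \<and> s < t \<longrightarrow> L s = P t"
    and eqP: "\<And>t. a < t \<Longrightarrow> t < b \<Longrightarrow> L t = P t"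
    and s: "a \<le> s" "s < b"
  shows "L s = L a"
proof -
  have "L a = L s"
  proof (rule connected_local_const[where A="{a..<b}"])
    show "connected {a..<b}" by simp
    show "a \<in> {a..<b}" "s \<in> {a..<b}" using s by auto
    show "\<forall>x\<in>{a..<b}. eventually (\<lambda>y. L x = L y) (at x within {a..<b})"
    proof
      fix x assume x: "x \<in> {a..<b}"
      obtain e1 where e1: "e1 > 0" "\<forall>s. x < s \<and> s < x + e1 \<longrightarrow> L s = L x"
        using right x by auto
      show "eventually (\<lambda>y. L x = L y) (at x within {a..<b})"
      proof (cases "a < x")
        case True
        obtain e2 where e2: "e2 > 0" "\<forall>s. x - e2 < s \<and> s < x \<longrightarrow> L s = P x"
          using left True x by auto
        have lx: "L x = P x" using eqP True x by auto
        show ?thesis unfolding eventually_at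
        proof (intro exI[of _ "min e1 e2"] conjI ballI impI)
          show "0 < min e1 e2" using e1 e2 by simp
          fix y assume "y \<in> {a..<b}" "y \<noteq> x \<and> dist y x < min e1 e2"
          then have "y < x \<or> x < y" "\<bar>y - x\<bar> < e1" "\<bar>y - x\<bar> < e2" by (auto simp: dist_real_def)
          then show "L x = L y" using e1 e2 lx by (metis abs_diff_less_iff add.commute)
        qed
      next
        case False
        then have xa: "x = a" using x by auto
        show ?thesis unfolding eventually_at
        proof (intro exI[of _ "e1"] conjI ballI impI)
          show "0 < e1" using e1 by simp
          fix y assume "y \<in> {a..<b}" "y \<noteq> x \<and> dist y x < e1"
          then have "x < y" "y < x + e1" using xa by (auto simp: dist_real_def)
          then show "L x = L y" using e1 by metis
        qed
      qed
    qed
  qed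
  then show ?thesis by simp
qed

lemma cis_eq_one_iff: "cis z = 1 \<longleftrightarrow> (\<exists>n::int. z = of_int n * 2 * pi)"
proof
  assume "cis z = 1"
  then have "cos z = 1" by (metis cis.simps(1) one_complex.sel(1))
  then show "\<exists>n::int. z = of_int n * 2 * pi" using cos_one_2pi_int by blast
next
  assume "\<exists>n::int. z = of_int n * 2 * pi"
  then obtain n :: int where "z = of_int n * 2 * pi" by blast
  then have "z = 2 * pi * of_int n" by simp
  then show "cis z = 1" by simp
qed

lemma cis_quarter_eq:
  "cis (pi/2 * x) = cis (pi/2 * y) \<longleftrightarrow> (\<exists>n::int. x - y = 4 * of_int n)"
proof -
  have "cis (pi/2 * x) = cis (pi/2 * y) \<longleftrightarrow> cis (pi/2 * x) / cis (pi/2 * y) = 1" by simp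
  also have "\<dots> \<longleftrightarrow> cis (pi/2 * (x - y)) = 1" by (simp add: cis_divide right_diff_distrib)
  also have "\<dots> \<longleftrightarrow> (\<exists>n::int. pi/2 * (x - y) = of_int n * 2 * pi)" by (rule cis_eq_one_iff)
  also have "\<dots> \<longleftrightarrow> (\<exists>n::int. x - y = 4 * of_int n)"
  proof -
    have "\<And>n::int. pi/2 * (x - y) = of_int n * 2 * pi \<longleftrightarrow> x - y = 4 * of_int n"
    proof -
      fix n :: int
      have "pi/2 * (x - y) = of_int n * 2 * pi \<longleftrightarrow> (pi/2) * (x - y) = (pi/2) * (4 * of_int n)"
        by (simp add: algebra_simps)
      also have "\<dots> \<longleftrightarrow> x - y = 4 * of_int n" using pi_gt_zero by (simp only: mult_cancel_left) simp
      finally show "pi/2 * (x - y) = of_int n * 2 * pi \<longleftrightarrow> x - y = 4 * of_int n" .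
    qed
    then show ?thesis by simp
  qed
  finally show ?thesis .
qed

lemma cis_quarter_int_eq:
  fixes x y :: int
  shows "cis (pi/2 * of_int x) = cis (pi/2 * of_int y) \<longleftrightarrow> (x - y) mod 4 = 0"
proof -
  have e: "(real_of_int x - of_int y = 4 * of_int n) = (x - y = 4 * n)" for n :: int
  proof -
    have "real_of_int x - of_int y = of_int (x - y)" by simp
    moreover have "4 * real_of_int n = of_int (4 * n)" by simp
    ultimately show ?thesis by (simp only: of_int_eq_iff)
  qed
  have "(x - y) mod 4 = 0 \<longleftrightarrow> (\<exists>n. x - y = 4 * n)" by (auto simp: mod_eq_0_iff_dvd dvd_def)
  then show ?thesis unfolding cis_quarter_eq e by simp
qed




lemma cis_quarter_eqI: "x - y = 4 * of_int k \<Longrightarrow> cis (pi/2 * x) = cis (pi/2 * y)"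
  using cis_quarter_eq by blast

lemma neg_inv_cis: "- inverse (cis (pi/2 * X)) = cis (pi/2 * (2 - X))"
proof -
  have "- inverse (cis (pi/2 * X)) = cis pi * cis (- (pi/2 * X))" by simp
  also have "\<dots> = cis (pi + - (pi/2 * X))" by (rule cis_mult)
  also have "pi + - (pi/2 * X) = pi/2 * (2 - X)" by (simp add: algebra_simps)
  finally show ?thesis .
qed

lemma inv_cis: "inverse (cis (pi/2 * X)) = cis (pi/2 * (- X))" by simp

lemma quarter_aux:
  fixes P :: real and dc :: int
  shows "(\<exists>k::int. 2 * real j + P - of_int dc = 4 * of_int k) \<longleftrightarrow> (\<exists>w::int. P = of_int w \<and> (2 * int j + w - dc) mod 4 = 0)"
  proof
    assume "\<exists>k::int. 2 * real j + P - of_int dc = 4 * of_int k"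
    then obtain k :: int where k: "2 * real j + P - of_int dc = 4 * of_int k" by auto
    have "P = of_int (4 * k + dc - 2 * int j)" using k by simp
    moreover have "(2 * int j + (4 * k + dc - 2 * int j) - dc) mod 4 = 0" by simp
    ultimately show "\<exists>w::int. P = of_int w \<and> (2 * int j + w - dc) mod 4 = 0" by (intro exI[of _ "4 * k + dc - 2 * int j"] conjI)
  next
    assume "\<exists>w::int. P = of_int w \<and> (2 * int j + w - dc) mod 4 = 0"
    then obtain w :: int where w: "P = of_int w" "(2 * int j + w - dc) mod 4 = 0" by auto
    have "4 dvd (2 * int j + w - dc)" using w(2) by presburger
    then obtain k where k: "2 * int j + w - dc = 4 * k" by (elim dvdE)
    have "2 * real j + P - of_int dc = of_int (2 * int j + w - dc)" using w(1) by simp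
    also have "\<dots> = 4 * of_int k" unfolding k by simp
    finally show "\<exists>k::int. 2 * real j + P - of_int dc = 4 * of_int k" by (intro exI[of _ k])
  qed

lemma quarter_aux2:
  fixes P :: real and dc :: int
  shows "(\<exists>k::int. 2 * real j + - P - of_int dc = 4 * of_int k) \<longleftrightarrow> (\<exists>w::int. P = of_int w \<and> (2 * int j + - w - dc) mod 4 = 0)"
proof -
  have "(\<exists>k::int. 2 * real j + - P - of_int dc = 4 * of_int k) \<longleftrightarrow> (\<exists>w::int. - P = of_int w \<and> (2 * int j + w - dc) mod 4 = 0)"
    by (rule quarter_aux)
  also have "\<dots> \<longleftrightarrow> (\<exists>w::int. P = of_int w \<and> (2 * int j + - w - dc) mod 4 = 0)"
  proof
    assume "\<exists>w::int. - P = of_int w \<and> (2 * int j + w - dc) mod 4 = 0"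
    then obtain w :: int where w: "- P = of_int w" "(2 * int j + w - dc) mod 4 = 0" by auto
    have "P = of_int (- w)" using w(1) by simp
    then show "\<exists>w::int. P = of_int w \<and> (2 * int j + - w - dc) mod 4 = 0" using w(2) by (intro exI[of _ "- w"]) simp
  next
    assume "\<exists>w::int. P = of_int w \<and> (2 * int j + - w - dc) mod 4 = 0"
    then obtain w :: int where w: "P = of_int w" "(2 * int j + - w - dc) mod 4 = 0" by auto
    have "- P = of_int (- w)" using w(1) by simp
    then show "\<exists>w::int. - P = of_int w \<and> (2 * int j + w - dc) mod 4 = 0" using w(2) by (intro exI[of _ "- w"]) simp
  qed
  finally show ?thesis .
qed

lemma quarter_cond:
  "cis (pi/2 * (2 * real j + (if even (i + j) then P else - P))) = cis (pi/2 * of_int dc) \<longleftrightarrow>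
   (\<exists>w::int. P = of_int w \<and> (2 * int j + (if even (i + j) then w else - w) - dc) mod 4 = 0)"
proof (cases "even (i + j)")
  case True
  have "cis (pi/2 * (2 * real j + P)) = cis (pi/2 * of_int dc) \<longleftrightarrow> (\<exists>k::int. 2 * real j + P - of_int dc = 4 * of_int k)"
    by (rule cis_quarter_eq)
  then show ?thesis using True quarter_aux[of j P dc] by simp
next
  case False
  have "cis (pi/2 * (2 * real j + - P)) = cis (pi/2 * of_int dc) \<longleftrightarrow> (\<exists>k::int. 2 * real j + - P - of_int dc = 4 * of_int k)"
    by (rule cis_quarter_eq)
  then show ?thesis using False quarter_aux2[of j P dc] by simp
qed

lemma cis_dc0: "cis (pi/2 * of_int 0) = 1" by simp
lemma cis_dc2: "cis (pi/2 * of_int 2) = -1" by simp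
lemma cis_dc1: "cis (pi/2 * of_int 1) = \<i>" by simp
lemma cis_dc3: "cis (pi/2 * of_int 3) = - \<i>"
proof -
  have "cis (pi/2 * of_int 3) = cis (pi + pi/2)" by (rule arg_cong[where f=cis]) simp
  also have "\<dots> = cis pi * cis (pi/2)" by (simp only: cis_mult)
  finally show ?thesis by simp
qed
lemma cis_dc5: "cis (pi/2 * of_int 5) = \<i>"
proof -
  have "cis (pi/2 * of_int 5) = cis (2*pi + pi/2)" by (rule arg_cong[where f=cis]) simp
  also have "\<dots> = cis (2*pi) * cis (pi/2)" by (simp only: cis_mult)
  finally show ?thesis by simp
qed

lemma cE: "(2*int j + (if even(i+j) then w else -w) - 0) mod 4 = 0 \<longleftrightarrow> even w \<and> even (int j + w div 2)"
  by (cases "even (i+j)") (simp_all, presburger+)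
lemma cW: "(2*int j + (if even(i+j) then w else -w) - 2) mod 4 = 0 \<longleftrightarrow> even w \<and> odd (int j + w div 2)"
  by (cases "even (i+j)") (simp_all, presburger+)
lemma cN: "sb = 0 \<or> sb = 1 \<Longrightarrow> (2*int j + (if even(i+j) then w else -w) - (1 + 2*sb)) mod 4 = 0 \<longleftrightarrow> odd w \<and> even (int i + (w - 1 + 2*sb) div 2)"
  by (cases "even (i+j)"; cases "even i") (simp_all, presburger+)
lemma cS: "sb = 0 \<or> sb = 1 \<Longrightarrow> (2*int j + (if even(i+j) then w else -w) - (3 + 2*sb)) mod 4 = 0 \<longleftrightarrow> odd w \<and> odd (int i + (w - 1 + 2*sb) div 2)"
  by (cases "even (i+j)"; cases "even i") (simp_all, presburger+)



locale gctx =
  fixes n m :: nat and r :: real and c :: "nat \<times> nat \<Rightarrow> complex"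
    and f :: "nat \<times> nat \<Rightarrow> real" and g :: "nat \<times> nat \<Rightarrow> int"
    and c0 e \<sigma> :: complex
  assumes e0: "e \<noteq> 0" and sig: "\<sigma> = 1 \<or> \<sigma> = -1"
    and cdef: "\<And>i j. c (i, j) = c0 + of_nat j * e + of_nat i * (\<sigma> * \<i> * e)"
    and adj: "\<And>p q. comm_adj c r (grid_cells n m) p q \<longleftrightarrow>
                p \<in> grid_cells n m \<and> q \<in> grid_cells n m \<and> grid_adj p q"
    and sync: "sync_schedule c r (grid_cells n m) f g"
    and nm: "0 < n" "0 < m"
begin

definition eps :: complex where "eps = sgn e"
definition th :: "nat \<times> nat \<Rightarrow> real \<Rightarrow> real" where "th a t = f a + of_int (g a) * 2 * pi * t"
definition rho :: "nat \<times> nat \<Rightarrow> real \<Rightarrow> complex" where "rho a t = cis (th a t) / eps"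

lemma eps_nz: "eps \<noteq> 0" and eps_norm: "norm eps = 1"
  using e0 by (auto simp: eps_def norm_sgn sgn_zero_iff)

lemma sched_eq: "sched_pt c f g a t = c a + cis (th a t)"
  by (simp add: sched_pt_def th_def)

lemma at_link_iff: "sched_pt c f g a t = c a + eps * d \<longleftrightarrow> rho a t = d"
  using eps_nz by (auto simp: sched_eq rho_def field_simps)

lemma sig_norm: "norm (\<sigma> * \<i>) = 1" using sig by auto
lemma sig_sq: "\<sigma> * \<sigma> = 1" using sig by auto

lemma link_E: "link_pt (c (i, j)) (c (i, Suc j)) = c (i, j) + eps * 1"
  unfolding link_pt_def eps_def by (simp add: cdef algebra_simps)
lemma link_W: "link_pt (c (i, Suc j)) (c (i, j)) = c (i, Suc j) + eps * (-1)"
proof -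
  have "c (i, j) - c (i, Suc j) = - e" by (simp add: cdef algebra_simps)
  then show ?thesis unfolding link_pt_def eps_def by (simp add: sgn_minus)
qed
lemma link_N: "link_pt (c (i, j)) (c (Suc i, j)) = c (i, j) + eps * (\<sigma> * \<i>)"
proof -
  have "c (Suc i, j) - c (i, j) = (\<sigma> * \<i>) * e" by (simp add: cdef algebra_simps)
  moreover have "sgn (\<sigma> * \<i>) = \<sigma> * \<i>" using sig_norm by (simp add: sgn_div_norm)
  ultimately show ?thesis unfolding link_pt_def eps_def by (simp add: sgn_mult mult.commute)
qed
lemma link_S: "link_pt (c (Suc i, j)) (c (i, j)) = c (Suc i, j) + eps * (- (\<sigma> * \<i>))"
proof -
  have "c (i, j) - c (Suc i, j) = (- (\<sigma> * \<i>)) * e" by (simp add: cdef algebra_simps)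
  moreover have "sgn (- (\<sigma> * \<i>)) = - (\<sigma> * \<i>)" using sig_norm by (simp add: sgn_div_norm)
  ultimately show ?thesis unfolding link_pt_def eps_def by (simp add: sgn_mult mult.commute)
qed

lemma g_pm: "a \<in> grid_cells n m \<Longrightarrow> g a = 1 \<or> g a = -1"
  using sync unfolding sync_schedule_def by blast

lemma exists_time:
  assumes a: "a \<in> grid_cells n m" and d: "norm d = 1"
  shows "\<exists>t. rho a t = d"
proof -
  define t where "t = (Arg (d * eps) - f a) / (of_int (g a) * 2 * pi)"
  have gnz: "real_of_int (g a) \<noteq> 0" using g_pm[OF a] by auto
  have "th a t = Arg (d * eps)" unfolding th_def t_def using gnz by (simp add: field_simps)
  moreover have "d * eps \<noteq> 0" using d eps_nz by auto
  moreover have "sgn (d * eps) = d * eps" using d eps_norm by (simp add: sgn_div_norm norm_mult)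
  ultimately have "cis (th a t) = d * eps" by (simp add: cis_Arg)
  then show ?thesis using eps_nz unfolding rho_def by (intro exI[of _ t]) simp
qed

lemma prod_const:
  assumes "g b = - g a"
  shows "rho a t * rho b t = rho a s * rho b s"
proof -
  have "\<And>t. rho a t * rho b t = cis (f a + f b) / (eps * eps)"
    unfolding rho_def th_def using assms by (simp add: cis_mult algebra_simps)
  then show ?thesis by simp
qed

lemma rho_nz: "rho a t \<noteq> 0" using eps_nz by (simp add: rho_def)

lemma rel_E:
  assumes a: "(i, j) \<in> grid_cells n m" and b: "(i, Suc j) \<in> grid_cells n m"
  shows "rho (i, Suc j) t = - inverse (rho (i, j) t)"
proof -
  have ca: "comm_adj c r (grid_cells n m) (i, j) (i, Suc j)" using a b by (simp add: adj grid_adj_def)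
  then have gs: "g (i, j) = - g (i, Suc j)"
    and sy: "\<And>t. sched_pt c f g (i,j) t = link_pt (c (i,j)) (c (i, Suc j)) \<longleftrightarrow>
                  sched_pt c f g (i, Suc j) t = link_pt (c (i, Suc j)) (c (i,j))"
    using sync unfolding sync_schedule_def by blast+
  obtain t0 where t0: "rho (i,j) t0 = 1" using exists_time[OF a, of 1] by auto
  have "sched_pt c f g (i,j) t0 = link_pt (c (i,j)) (c (i, Suc j))"
    unfolding link_E at_link_iff using t0 .
  then have "sched_pt c f g (i, Suc j) t0 = link_pt (c (i, Suc j)) (c (i,j))" using sy by blast
  then have t1: "rho (i, Suc j) t0 = -1" unfolding link_W at_link_iff .
  have "rho (i,j) t * rho (i, Suc j) t = rho (i,j) t0 * rho (i, Suc j) t0"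
    by (rule prod_const) (use gs in simp)
  also have "\<dots> = -1" using t0 t1 by simp
  finally have "rho (i,j) t * rho (i, Suc j) t = -1" .
  then show ?thesis using rho_nz[of "(i,j)" t] by (simp add: field_simps)
qed

lemma rel_N:
  assumes a: "(i, j) \<in> grid_cells n m" and b: "(Suc i, j) \<in> grid_cells n m"
  shows "rho (Suc i, j) t = inverse (rho (i, j) t)"
proof -
  have ca: "comm_adj c r (grid_cells n m) (i, j) (Suc i, j)" using a b by (simp add: adj grid_adj_def)
  then have gs: "g (i, j) = - g (Suc i, j)"
    and sy: "\<And>t. sched_pt c f g (i,j) t = link_pt (c (i,j)) (c (Suc i, j)) \<longleftrightarrow>
                  sched_pt c f g (Suc i, j) t = link_pt (c (Suc i, j)) (c (i,j))"
    using sync unfolding sync_schedule_def by blast+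
  obtain t0 where t0: "rho (i,j) t0 = \<sigma> * \<i>" using exists_time[OF a sig_norm] by auto
  have "sched_pt c f g (i,j) t0 = link_pt (c (i,j)) (c (Suc i, j))"
    unfolding link_N at_link_iff using t0 .
  then have "sched_pt c f g (Suc i, j) t0 = link_pt (c (Suc i, j)) (c (i,j))" using sy by blast
  then have t1: "rho (Suc i, j) t0 = - (\<sigma> * \<i>)" unfolding link_S at_link_iff .
  have "rho (i,j) t * rho (Suc i, j) t = rho (i,j) t0 * rho (Suc i, j) t0"
    by (rule prod_const) (use gs in simp)
  also have "\<dots> = 1" using t0 t1 sig_sq by (simp add: algebra_simps)
  finally have "rho (i,j) t * rho (Suc i, j) t = 1" .
  then show ?thesis using rho_nz[of "(i,j)" t] by (simp add: field_simps)
qed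


definition Phi :: "real \<Rightarrow> real" where "Phi t = 2 / pi * (th (0,0) t - Arg eps)"

lemma rho00: "rho (0,0) t = cis (pi/2 * Phi t)"
proof -
  have e1: "pi/2 * Phi t = th (0,0) t - Arg eps" unfolding Phi_def by simp
  have "cis (Arg eps) = eps" using eps_nz eps_norm by (simp add: cis_Arg sgn_div_norm)
  moreover have "cis (pi/2 * Phi t) = cis (th (0,0) t) / cis (Arg eps)" unfolding e1 by (rule cis_divide[symmetric])
  ultimately show ?thesis unfolding rho_def by simp
qed

definition X :: "nat \<times> nat \<Rightarrow> real \<Rightarrow> real" where
  "X a t = 2 * real (snd a) + (if even (fst a + snd a) then Phi t else - Phi t)"

lemma rho_closed0: "j < m \<Longrightarrow> rho (0, j) t = cis (pi/2 * X (0, j) t)"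
proof (induction j)
  case 0 then show ?case by (simp add: rho00 X_def)
next
  case (Suc j)
  have a: "(0, j) \<in> grid_cells n m" and b: "(0, Suc j) \<in> grid_cells n m"
    using Suc.prems nm by (auto simp: grid_cells_def)
  have "rho (0, Suc j) t = - inverse (rho (0, j) t)" by (rule rel_E[OF a b])
  also have "\<dots> = cis (pi/2 * (2 - X (0, j) t))"
  proof -
    have "rho (0, j) t = cis (pi/2 * X (0, j) t)" using Suc by simp
    then show ?thesis by (simp only: neg_inv_cis)
  qed
  also have "\<dots> = cis (pi/2 * X (0, Suc j) t)"
    by (rule cis_quarter_eqI[where k = "- int j"]) (simp add: X_def)
  finally show ?case .
qed

lemma rho_closed: "(i, j) \<in> grid_cells n m \<Longrightarrow> rho (i, j) t = cis (pi/2 * X (i, j) t)"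
proof (induction i)
  case 0 then show ?case using rho_closed0 by (simp add: grid_cells_def)
next
  case (Suc i)
  have a: "(i, j) \<in> grid_cells n m" and b: "(Suc i, j) \<in> grid_cells n m"
    using Suc.prems by (auto simp: grid_cells_def)
  have "rho (Suc i, j) t = inverse (rho (i, j) t)" by (rule rel_N[OF a b])
  also have "\<dots> = cis (pi/2 * (- X (i, j) t))"
  proof -
    have "rho (i, j) t = cis (pi/2 * X (i, j) t)" using Suc a by simp
    then show ?thesis by (simp only: inv_cis)
  qed
  also have "\<dots> = cis (pi/2 * X (Suc i, j) t)"
    by (rule cis_quarter_eqI[where k = "- int j"]) (simp add: X_def)
  finally show ?case .
qed


definition sb :: int where "sb = (if \<sigma> = 1 then 0 else 1)"
lemma sb01: "sb = 0 \<or> sb = 1" by (simp add: sb_def)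

lemma sigN: "\<sigma> * \<i> = cis (pi/2 * of_int (1 + 2 * sb))"
  using sig by (auto simp: sb_def cis_dc3[simplified])
lemma sigS: "- (\<sigma> * \<i>) = cis (pi/2 * of_int (3 + 2 * sb))"
  using sig by (auto simp: sb_def cis_dc3[simplified] cis_dc5[simplified])

lemma link_gen:
  assumes "(i, j) \<in> grid_cells n m"
  shows "sched_pt c f g (i, j) t = c (i, j) + eps * cis (pi/2 * of_int dc) \<longleftrightarrow>
    (\<exists>w::int. Phi t = of_int w \<and> (2 * int j + (if even (i + j) then w else - w) - dc) mod 4 = 0)"
  unfolding at_link_iff rho_closed[OF assms] X_def using quarter_cond by simp

lemma linkE_iff: "(i, j) \<in> grid_cells n m \<Longrightarrow>
  sched_pt c f g (i, j) t = link_pt (c (i, j)) (c (i, Suc j)) \<longleftrightarrow>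
  (\<exists>w::int. Phi t = of_int w \<and> even w \<and> even (int j + w div 2))"
  using link_gen[of i j t 0] cE[of j i] unfolding link_E by simp

lemma linkW_iff: "(i, Suc j) \<in> grid_cells n m \<Longrightarrow>
  sched_pt c f g (i, Suc j) t = link_pt (c (i, Suc j)) (c (i, j)) \<longleftrightarrow>
  (\<exists>w::int. Phi t = of_int w \<and> even w \<and> odd (int (Suc j) + w div 2))"
  using link_gen[of i "Suc j" t 2] cW[of "Suc j" i] cis_dc2 unfolding link_W by simp

lemma linkN_iff: "(i, j) \<in> grid_cells n m \<Longrightarrow>
  sched_pt c f g (i, j) t = link_pt (c (i, j)) (c (Suc i, j)) \<longleftrightarrow>
  (\<exists>w::int. Phi t = of_int w \<and> odd w \<and> even (int i + (w - 1 + 2 * sb) div 2))"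
  using link_gen[of i j t "1 + 2 * sb"] cN[OF sb01, of j i] unfolding link_N sigN by simp

lemma linkS_iff: "(Suc i, j) \<in> grid_cells n m \<Longrightarrow>
  sched_pt c f g (Suc i, j) t = link_pt (c (Suc i, j)) (c (i, j)) \<longleftrightarrow>
  (\<exists>w::int. Phi t = of_int w \<and> odd w \<and> odd (int (Suc i) + (w - 1 + 2 * sb) div 2))"
  using link_gen[of "Suc i" j t "3 + 2 * sb"] cS[OF sb01, of j "Suc i"] unfolding link_S sigS by simp


definition gstep :: "int \<Rightarrow> nat \<times> nat \<Rightarrow> nat \<times> nat" where
  "gstep w a = (wstep n (w - 1 + 2 * sb) (fst a), wstep m w (snd a))"

lemma gstep_in: "a \<in> grid_cells n m \<Longrightarrow> gstep w a \<in> grid_cells n m"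
  by (auto simp: gstep_def grid_cells_def wstep_lt)

lemma odd_shift: "even w \<Longrightarrow> odd (w - 1 + 2 * sb)" "odd w \<Longrightarrow> even (w - 1 + 2 * sb)"
  by auto

lemma link_iff:
  assumes a: "a \<in> grid_cells n m"
  shows "(comm_adj c r (grid_cells n m) a b \<and> sched_pt c f g a t = link_pt (c a) (c b)) \<longleftrightarrow>
         (\<exists>w::int. Phi t = of_int w \<and> b = gstep w a \<and> b \<noteq> a)"
proof
  assume H: "comm_adj c r (grid_cells n m) a b \<and> sched_pt c f g a t = link_pt (c a) (c b)"
  obtain i j where ij: "a = (i, j)" by force
  obtain i' j' where ij': "b = (i', j')" by force
  have bV: "b \<in> grid_cells n m" and ga: "grid_adj a b" using H adj by auto
  have lk: "sched_pt c f g a t = link_pt (c a) (c b)" using H by blast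
  from ga consider "i' = i" "j' = Suc j" | "i' = i" "j = Suc j'" | "j' = j" "i' = Suc i" | "j' = j" "i = Suc i'"
    unfolding ij ij' grid_adj_def by auto
  then show "\<exists>w::int. Phi t = of_int w \<and> b = gstep w a \<and> b \<noteq> a"
  proof cases
    case 1
    then obtain w :: int where w: "Phi t = of_int w" "even w" "even (int j + w div 2)"
      using linkE_iff[of i j t] a lk unfolding ij ij' by auto
    have "Suc j < m" using bV 1 unfolding ij' grid_cells_def by auto
    then have "gstep w a = b" using w 1 unfolding gstep_def wstep_def ij ij' by auto
    then show ?thesis using w 1 unfolding ij ij' by auto
  next
    case 2
    then obtain w :: int where w: "Phi t = of_int w" "even w" "odd (int (Suc j') + w div 2)"
      using linkW_iff[of i j' t] a lk unfolding ij ij' by auto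
    then have "gstep w a = b" using w 2 unfolding gstep_def wstep_def ij ij' by auto
    then show ?thesis using w 2 unfolding ij ij' by auto
  next
    case 3
    then obtain w :: int where w: "Phi t = of_int w" "odd w" "even (int i + (w - 1 + 2 * sb) div 2)"
      using linkN_iff[of i j t] a lk unfolding ij ij' by auto
    have "Suc i < n" using bV 3 unfolding ij' grid_cells_def by auto
    then have "gstep w a = b" using w 3 unfolding gstep_def wstep_def ij ij' by auto
    then show ?thesis using w 3 unfolding ij ij' by auto
  next
    case 4
    then obtain w :: int where w: "Phi t = of_int w" "odd w" "odd (int (Suc i') + (w - 1 + 2 * sb) div 2)"
      using linkS_iff[of i' j t] a lk unfolding ij ij' by auto
    then have "gstep w a = b" using w 4 unfolding gstep_def wstep_def ij ij' by auto
    then show ?thesis using w 4 unfolding ij ij' by auto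
  qed
next
  assume "\<exists>w::int. Phi t = of_int w \<and> b = gstep w a \<and> b \<noteq> a"
  then obtain w :: int where w: "Phi t = of_int w" and b: "b = gstep w a" and ne: "b \<noteq> a" by auto
  obtain i j where ij: "a = (i, j)" by force
  have bV: "b \<in> grid_cells n m" using gstep_in[OF a] b by simp
  show "comm_adj c r (grid_cells n m) a b \<and> sched_pt c f g a t = link_pt (c a) (c b)"
  proof (cases "even w")
    case True
    have row: "wstep n (w - 1 + 2 * sb) i = i" using odd_shift(1)[OF True] by (simp add: wstep_def)
    show ?thesis
    proof (cases "even (int j + w div 2)")
      case True2: True
      have "Suc j < m" and bb: "b = (i, Suc j)"
        using ne b row True True2 unfolding ij gstep_def wstep_def by (auto split: if_splits)
      have "sched_pt c f g a t = link_pt (c a) (c b)"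
        unfolding ij bb using linkE_iff[of i j t] a w True True2 unfolding ij by auto
      moreover have "comm_adj c r (grid_cells n m) a b" using a bV unfolding adj bb ij grid_adj_def by auto
      ultimately show ?thesis by simp
    next
      case False2: False
      have "0 < j" and bb: "b = (i, j - 1)"
        using ne b row True False2 unfolding ij gstep_def wstep_def by (auto split: if_splits)
      then obtain j' where j': "j = Suc j'" by (metis gr0_implies_Suc)
      have bb': "b = (i, j')" using bb j' by simp
      have "sched_pt c f g a t = link_pt (c a) (c b)"
        unfolding ij bb' j' using linkW_iff[of i j' t] a w True False2 unfolding ij j' by auto
      moreover have "comm_adj c r (grid_cells n m) a b" using a bV unfolding adj bb' ij j' grid_adj_def by auto
      ultimately show ?thesis by simp
    qed
  next
    case False
    have col: "wstep m w j = j" using False by (simp add: wstep_def)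
    have ev: "even (w - 1 + 2 * sb)" using odd_shift(2)[OF False] .
    show ?thesis
    proof (cases "even (int i + (w - 1 + 2 * sb) div 2)")
      case True2: True
      have "Suc i < n" and bb: "b = (Suc i, j)"
        using ne b col ev True2 unfolding ij gstep_def wstep_def by (auto split: if_splits)
      have "sched_pt c f g a t = link_pt (c a) (c b)"
        unfolding ij bb using linkN_iff[of i j t] a w False True2 unfolding ij by auto
      moreover have "comm_adj c r (grid_cells n m) a b" using a bV unfolding adj bb ij grid_adj_def by auto
      ultimately show ?thesis by simp
    next
      case False2: False
      have "0 < i" and bb: "b = (i - 1, j)"
        using ne b col ev False2 unfolding ij gstep_def wstep_def by (auto split: if_splits)
      then obtain i' where i': "i = Suc i'" by (metis gr0_implies_Suc)
      have bb': "b = (i', j)" using bb i' by simp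
      have "sched_pt c f g a t = link_pt (c a) (c b)"
        unfolding ij bb' i' using linkS_iff[of i' j t] a w False False2 unfolding ij i' by auto
      moreover have "comm_adj c r (grid_cells n m) a b" using a bV unfolding adj bb' ij i' grid_adj_def by auto
      ultimately show ?thesis by simp
    qed
  qed
qed

end



lemma wstep_sgn: "G = 1 \<or> G = -1 \<Longrightarrow> wstep N (G * q) x = wstep N q x"
  using wstep_uminus by auto

primrec seqf :: "(nat \<Rightarrow> 'a \<Rightarrow> 'a) \<Rightarrow> 'a \<Rightarrow> nat \<Rightarrow> 'a" where
  "seqf F a 0 = a" | "seqf F a (Suc k) = F k (seqf F a k)"

context gctx begin

definition G :: int where "G = g (0,0)"
definition W0 :: int where "W0 = \<lceil>of_int G * Phi 0\<rceil>"
definition tau0 :: real where "tau0 = (of_int W0 - of_int G * Phi 0) / 4"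
definition TT :: "nat \<Rightarrow> real" where "TT k = (if k = 0 then 0 else tau0 + real (k - 1) / 4)"

lemma V00: "(0,0) \<in> grid_cells n m" using nm by (simp add: grid_cells_def)
lemma G_pm: "G = 1 \<or> G = -1" unfolding G_def using g_pm[OF V00] .
lemma GG: "of_int G * of_int G = (1::real)"
proof -
  have "G * G = 1" using G_pm by auto
  then have "real_of_int (G * G) = 1" by simp
  then show ?thesis by (simp only: of_int_mult)
qed

lemma Phi_lin: "Phi t = Phi 0 + 4 * of_int G * t"
proof -
  have "2 / pi * (of_int (g (0,0)) * 2 * pi * t) = 4 * of_int (g (0,0)) * t" using pi_gt_zero by simp
  then show ?thesis unfolding Phi_def th_def G_def by (simp add: algebra_simps)
qed

lemma Psi: "of_int G * Phi t = of_int G * Phi 0 + 4 * t"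
proof -
  have "of_int G * Phi t = of_int G * Phi 0 + 4 * (of_int G * of_int G) * t"
    by (subst Phi_lin) (simp add: algebra_simps)
  then show ?thesis using GG by simp
qed

lemma tau4: "4 * tau0 = of_int W0 - of_int G * Phi 0" unfolding tau0_def by simp
lemma W0c: "of_int W0 - 1 < of_int G * Phi 0" "of_int G * Phi 0 \<le> of_int W0"
  unfolding W0_def using ceiling_correct[of "of_int G * Phi 0"] by auto

lemma tau0_bounds: "0 \<le> tau0" "tau0 < 1/4"
  using tau4 W0c by linarith+

lemma TT_Suc: "TT (Suc k) = tau0 + real k / 4" by (simp add: TT_def)

lemma Phi_event: "Phi (TT (Suc k)) = of_int (G * (W0 + int k))"
proof -
  have "of_int G * Phi (TT (Suc k)) = of_int G * Phi 0 + 4 * (tau0 + real k / 4)"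
    unfolding TT_Suc by (rule Psi)
  also have "\<dots> = of_int W0 + real k" using tau4 by (simp add: algebra_simps)
  finally have "of_int G * Phi (TT (Suc k)) = of_int (W0 + int k)" by simp
  then have "of_int G * (of_int G * Phi (TT (Suc k))) = of_int G * of_int (W0 + int k)" by simp
  then show ?thesis using GG by (simp add: mult.assoc[symmetric])
qed

lemma int_between: "of_int a < (x::real) \<Longrightarrow> x < of_int a + 1 \<Longrightarrow> \<not> (\<exists>w::int. x = of_int w)"
proof
  assume "of_int a < x" "x < of_int a + 1" "\<exists>w::int. x = of_int w"
  then obtain w :: int where "real_of_int a < of_int w" "of_int w < real_of_int a + 1" by auto
  then have "a < w" "w < a + 1" by linarith+
  then show False by simp
qed

lemma noevent_G: assumes "\<not> (\<exists>w::int. of_int G * Phi s = of_int w)" shows "\<not> (\<exists>w::int. Phi s = of_int w)"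
proof
  assume "\<exists>w::int. Phi s = of_int w"
  then obtain w :: int where "Phi s = of_int w" by auto
  then have "of_int G * Phi s = of_int (G * w)" by simp
  then have "\<exists>w'::int. of_int G * Phi s = of_int w'" by (intro exI)
  then show False using assms by simp
qed

lemma noevent0: "0 \<le> s \<Longrightarrow> s < tau0 \<Longrightarrow> \<not> (\<exists>w::int. Phi s = of_int w)"
proof -
  assume s: "0 \<le> s" "s < tau0"
  have e: "of_int G * Phi s = of_int G * Phi 0 + 4 * s" by (rule Psi)
  have "of_int W0 - 1 < of_int G * Phi s" "of_int G * Phi s < of_int W0"
    using s W0c tau4 unfolding e by linarith+
  then have "real_of_int (W0 - 1) < of_int G * Phi s" "of_int G * Phi s < real_of_int (W0 - 1) + 1"
    by simp_all
  then show ?thesis using int_between noevent_G by blast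
qed

lemma noevent_mid: "TT (Suc k) < s \<Longrightarrow> s < TT (Suc (Suc k)) \<Longrightarrow> \<not> (\<exists>w::int. Phi s = of_int w)"
proof -
  assume s: "TT (Suc k) < s" "s < TT (Suc (Suc k))"
  have s': "tau0 + real k / 4 < s" "s < tau0 + real k / 4 + 1/4" 
    using s unfolding TT_Suc by (simp_all add: field_simps)
  have e: "of_int G * Phi s = of_int G * Phi 0 + 4 * s" by (rule Psi)
  have "of_int W0 + real k < of_int G * Phi s" "of_int G * Phi s < of_int W0 + real k + 1"
    using s' tau4 unfolding e by linarith+
  then have "real_of_int (W0 + int k) < of_int G * Phi s" "of_int G * Phi s < real_of_int (W0 + int k) + 1"
    by simp_all
  then show ?thesis using int_between noevent_G by blast
qed


lemma runD:
  assumes run: "partial_scs_run c r (grid_cells n m) f g loc pre" and u: "u \<in> grid_cells n m"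
  shows "pre u 0 = Some u"
    and "\<And>t. 0 \<le> t \<Longrightarrow> \<exists>\<epsilon>>0. \<forall>s. t < s \<and> s < t + \<epsilon> \<longrightarrow> loc u s = loc u t"
    and "\<And>t. 0 < t \<Longrightarrow> \<exists>\<epsilon>>0. \<forall>s. t - \<epsilon> < s \<and> s < t \<longrightarrow> loc u s = pre u t"
    and "\<And>t. 0 \<le> t \<Longrightarrow> pre u t = None \<Longrightarrow> loc u t = None"
    and "\<And>t a. 0 \<le> t \<Longrightarrow> pre u t = Some a \<Longrightarrow>
           loc u t = None \<or>
           (\<exists>b. comm_adj c r (grid_cells n m) a b \<and> sched_pt c f g a t = link_pt (c a) (c b) \<and>
                \<not> occ_pre (grid_cells n m) pre t b \<and> loc u t = Some b) \<or>
           (loc u t = Some a \<and>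
              \<not> (\<exists>b. comm_adj c r (grid_cells n m) a b \<and> sched_pt c f g a t = link_pt (c a) (c b) \<and>
                     \<not> occ_pre (grid_cells n m) pre t b))"
proof -
  note H = conjunct2[OF conjunct2[OF run[unfolded partial_scs_run_def]]]
  note H1 = conjunct1[OF conjunct2[OF run[unfolded partial_scs_run_def]]]
  show "pre u 0 = Some u" using H1 u by simp
  fix t :: real assume t: "0 \<le> t"
  note Hu = mp[OF spec[OF bspec[OF H u], of t] t[unfolded atomize_imp]]
  show "\<exists>\<epsilon>>0. \<forall>s. t < s \<and> s < t + \<epsilon> \<longrightarrow> loc u s = loc u t" by (rule conjunct1[OF Hu])
  show "pre u t = None \<Longrightarrow> loc u t = None" using conjunct1[OF conjunct2[OF conjunct2[OF Hu]]] by simp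
  fix a assume "pre u t = Some a"
  then show "loc u t = None \<or>
           (\<exists>b. comm_adj c r (grid_cells n m) a b \<and> sched_pt c f g a t = link_pt (c a) (c b) \<and>
                \<not> occ_pre (grid_cells n m) pre t b \<and> loc u t = Some b) \<or>
           (loc u t = Some a \<and>
              \<not> (\<exists>b. comm_adj c r (grid_cells n m) a b \<and> sched_pt c f g a t = link_pt (c a) (c b) \<and>
                     \<not> occ_pre (grid_cells n m) pre t b))"
    using spec[OF conjunct2[OF conjunct2[OF conjunct2[OF Hu]]], of a] by simp
next
  fix t :: real assume t: "0 < t"
  note H = conjunct2[OF conjunct2[OF run[unfolded partial_scs_run_def]]]
  have t': "0 \<le> t" using t by simp
  note Hu = mp[OF spec[OF bspec[OF H u], of t] t'[unfolded atomize_imp]]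
  show "\<exists>\<epsilon>>0. \<forall>s. t - \<epsilon> < s \<and> s < t \<longrightarrow> loc u s = pre u t"
    using conjunct1[OF conjunct2[OF Hu]] t by simp
qed

lemma step_event:
  assumes run: "partial_scs_run c r (grid_cells n m) f g loc pre" and u: "u \<in> grid_cells n m"
    and st: "starves c r (grid_cells n m) f g loc pre u"
    and t: "0 \<le> t" and pa: "pre u t = Some a" and a: "a \<in> grid_cells n m"
    and w: "Phi t = of_int w"
  shows "loc u t = Some (gstep w a)"
proof -
  have nn: "loc u t \<noteq> None" using st t unfolding starves_def surviving_def by blast
  have noc: "\<And>b. comm_adj c r (grid_cells n m) a b \<Longrightarrow> sched_pt c f g a t = link_pt (c a) (c b) \<Longrightarrow>
      \<not> occ_pre (grid_cells n m) pre t b"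
    using st t pa unfolding starves_def by blast
  from runD(5)[OF run u t pa] nn consider
    (pass) b where "comm_adj c r (grid_cells n m) a b" "sched_pt c f g a t = link_pt (c a) (c b)" "loc u t = Some b"
    | (stay) "loc u t = Some a" "\<not> (\<exists>b. comm_adj c r (grid_cells n m) a b \<and> sched_pt c f g a t = link_pt (c a) (c b) \<and>
                     \<not> occ_pre (grid_cells n m) pre t b)"
    by blast
  then show ?thesis
  proof cases
    case pass
    then obtain w' :: int where w': "Phi t = of_int w'" "b = gstep w' a" using link_iff[OF a] by blast
    have "w' = w" using w w'(1) by simp
    then show ?thesis using pass w' by simp
  next
    case stay
    show ?thesis
    proof (cases "gstep w a = a")
      case True then show ?thesis using stay by simp
    next
      case False
      then have "comm_adj c r (grid_cells n m) a (gstep w a) \<and> sched_pt c f g a t = link_pt (c a) (c (gstep w a))"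
        using link_iff[OF a, of "gstep w a" t] w by auto
      then show ?thesis using stay noc by blast
    qed
  qed
qed

lemma step_nonevent:
  assumes run: "partial_scs_run c r (grid_cells n m) f g loc pre" and u: "u \<in> grid_cells n m"
    and st: "starves c r (grid_cells n m) f g loc pre u"
    and t: "0 \<le> t" and ne: "\<not> (\<exists>w::int. Phi t = of_int w)"
  shows "loc u t = pre u t"
proof -
  have nn: "loc u t \<noteq> None" using st t unfolding starves_def surviving_def by blast
  then obtain a where pa: "pre u t = Some a" using runD(4)[OF run u t] by fastforce
  from runD(5)[OF run u t pa] nn consider
    (pass) b where "comm_adj c r (grid_cells n m) a b" "sched_pt c f g a t = link_pt (c a) (c b)" "loc u t = Some b"
    | (stay) "loc u t = Some a"
    by blast
  then show ?thesis
  proof cases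
    case pass
    then have "a \<in> grid_cells n m" by (simp add: comm_adj_def)
    then show ?thesis using link_iff pass ne by blast
  next
    case stay then show ?thesis using pa by simp
  qed
qed

lemma const_seg:
  assumes run: "partial_scs_run c r (grid_cells n m) f g loc pre" and u: "u \<in> grid_cells n m"
    and st: "starves c r (grid_cells n m) f g loc pre u"
    and a0: "0 \<le> a" and ne: "\<And>s. a < s \<Longrightarrow> s < b \<Longrightarrow> \<not> (\<exists>w::int. Phi s = of_int w)"
    and s: "a \<le> s" "s < b"
  shows "loc u s = loc u a"
proof (rule const_interval[where P = "pre u" and b = b])
  show "\<And>t. a \<le> t \<Longrightarrow> t < b \<Longrightarrow> \<exists>\<epsilon>>0. \<forall>s. t < s \<and> s < t + \<epsilon> \<longrightarrow> loc u s = loc u t"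
    using runD(2)[OF run u] a0 by auto
  show "\<And>t. a < t \<Longrightarrow> t < b \<Longrightarrow> \<exists>\<epsilon>>0. \<forall>s. t - \<epsilon> < s \<and> s < t \<longrightarrow> loc u s = pre u t"
    using runD(3)[OF run u] a0 by auto
  show "\<And>t. a < t \<Longrightarrow> t < b \<Longrightarrow> loc u t = pre u t"
    using step_nonevent[OF run u st] ne a0 by auto
qed (use s in auto)

lemma pre_left:
  assumes run: "partial_scs_run c r (grid_cells n m) f g loc pre" and u: "u \<in> grid_cells n m"
    and a0: "0 \<le> a" and at: "a < t" and v: "\<And>s. a \<le> s \<Longrightarrow> s < t \<Longrightarrow> loc u s = v"
  shows "pre u t = v"
proof -
  obtain \<epsilon> where e: "\<epsilon> > 0" "\<forall>s. t - \<epsilon> < s \<and> s < t \<longrightarrow> loc u s = pre u t"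
    using runD(3)[OF run u] a0 at by force
  define s where "s = max (t - \<epsilon>/2) a"
  have "t - \<epsilon> < s" "s < t" "a \<le> s" unfolding s_def using e at by auto
  then have "loc u s = pre u t" "loc u s = v" using e v by auto
  then show ?thesis by simp
qed

definition Fst :: "nat \<Rightarrow> nat \<times> nat \<Rightarrow> nat \<times> nat" where "Fst k a = gstep (G * (W0 + int k)) a"

lemma traj:
  assumes run: "partial_scs_run c r (grid_cells n m) f g loc pre" and u: "u \<in> grid_cells n m"
    and st: "starves c r (grid_cells n m) f g loc pre u"
  shows "seqf Fst u k \<in> grid_cells n m \<and> (\<forall>s. TT k \<le> s \<and> s < TT (Suc k) \<longrightarrow> loc u s = Some (seqf Fst u k))
          \<and> pre u (TT (Suc k)) = Some (seqf Fst u k)"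
proof (induction k)
  case 0
  have p0: "pre u 0 = Some u" using runD(1)[OF run u] .
  show ?case
  proof (cases "tau0 = 0")
    case True
    then show ?thesis using u p0 by (auto simp: TT_def)
  next
    case False
    then have tp: "0 < tau0" using tau0_bounds by simp
    have l0: "loc u 0 = Some u"
      using step_nonevent[OF run u st, of 0] noevent0[of 0] tp p0 by simp
    have seg: "\<forall>s. 0 \<le> s \<and> s < tau0 \<longrightarrow> loc u s = Some u"
      using const_seg[OF run u st, of 0 tau0] noevent0 l0 by auto
    have "pre u tau0 = Some u" using pre_left[OF run u _ tp] seg by auto
    then show ?thesis using u seg by (simp add: TT_def)
  qed
next
  case (Suc k)
  let ?C = "seqf Fst u k"
  let ?T = "TT (Suc k)"
  have CV: "?C \<in> grid_cells n m" and pT: "pre u ?T = Some ?C" using Suc.IH by auto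
  have T0: "0 \<le> ?T" using tau0_bounds unfolding TT_Suc by simp
  have lT: "loc u ?T = Some (seqf Fst u (Suc k))"
    using step_event[OF run u st T0 pT CV Phi_event] by (simp add: Fst_def)
  have T2: "TT (Suc (Suc k)) = ?T + 1/4" unfolding TT_Suc by (simp add: field_simps)
  have seg: "\<forall>s. ?T \<le> s \<and> s < TT (Suc (Suc k)) \<longrightarrow> loc u s = Some (seqf Fst u (Suc k))"
    using const_seg[OF run u st T0, of "TT (Suc (Suc k))"] noevent_mid[of k] lT by auto
  have "pre u (TT (Suc (Suc k))) = Some (seqf Fst u (Suc k))"
    using pre_left[OF run u T0, of "TT (Suc (Suc k))"] seg T2 by auto
  moreover have "seqf Fst u (Suc k) \<in> grid_cells n m" using gstep_in[OF CV] by (simp add: Fst_def)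
  ultimately show ?case using seg by simp
qed


lemma GGi: "G * G = 1" using G_pm by auto

lemma rec_row: "fst (seqf Fst a (Suc k)) = wstep n ((W0 + G * (2 * sb - 1)) + int k) (fst (seqf Fst a k))"
proof -
  have "G * (W0 + int k) - 1 + 2 * sb = G * ((W0 + G * (2 * sb - 1)) + int k)"
    using GGi by (simp add: algebra_simps)
  then show ?thesis using wstep_sgn[OF G_pm] by (simp add: Fst_def gstep_def)
qed

lemma rec_col: "snd (seqf Fst a (Suc k)) = wstep m (W0 + int k) (snd (seqf Fst a k))"
  using wstep_sgn[OF G_pm] by (simp add: Fst_def gstep_def)

lemma meet_contra:
  assumes run: "partial_scs_run c r (grid_cells n m) f g loc pre"
    and u: "u \<in> grid_cells n m" and w: "w \<in> grid_cells n m"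
    and stu: "starves c r (grid_cells n m) f g loc pre u"
    and stw: "starves c r (grid_cells n m) f g loc pre w"
    and rw: "fst (seqf Fst u k) = fst (seqf Fst w k)"
    and ev: "even (W0 + int k)" and ev2: "even (int (snd (seqf Fst u k)) + (W0 + int k) div 2)"
    and nx: "snd (seqf Fst w k) = snd (seqf Fst u k) + 1"
  shows False
proof -
  let ?a = "seqf Fst u k" and ?b = "seqf Fst w k" and ?T = "TT (Suc k)"
  have tu: "?a \<in> grid_cells n m" "pre u ?T = Some ?a" using traj[OF run u stu] by auto
  have tw: "?b \<in> grid_cells n m" "pre w ?T = Some ?b" using traj[OF run w stw] by auto
  have T0: "0 \<le> ?T" using tau0_bounds unfolding TT_Suc by simp
  have "snd ?b < m" using tw(1) by (auto simp: grid_cells_def mem_Times_iff)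
  then have lt: "snd ?a + 1 < m" using nx by simp
  have evG: "even (G * (W0 + int k))" using ev by simp
  have r1: "wstep n (G * (W0 + int k) - 1 + 2 * sb) (fst ?a) = fst ?a"
    using odd_shift(1)[OF evG] by (simp add: wstep_def)
  have "wstep m (W0 + int k) (snd ?a) = snd ?a + 1"
    using ev ev2 lt by (simp add: wstep_def)
  then have r2: "wstep m (G * (W0 + int k)) (snd ?a) = snd ?a + 1"
    using wstep_sgn[OF G_pm] by simp
  have gb: "gstep (G * (W0 + int k)) ?a = ?b"
    unfolding gstep_def r1 r2 using rw nx by (simp add: prod_eq_iff)
  have ne: "?b \<noteq> ?a" using nx by (auto simp: prod_eq_iff)
  have E: "\<exists>wv::int. Phi ?T = of_int wv \<and> ?b = gstep wv ?a \<and> ?b \<noteq> ?a"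
    by (intro exI[of _ "G * (W0 + int k)"] conjI) (use Phi_event[of k] gb ne in auto)
  have "comm_adj c r (grid_cells n m) ?a ?b \<and> sched_pt c f g ?a ?T = link_pt (c ?a) (c ?b)"
    using iffD2[OF link_iff[OF tu(1), of ?b ?T] E] .
  then have "\<not> occ_pre (grid_cells n m) pre ?T ?b"
    using stu T0 tu(2) unfolding starves_def by blast
  moreover have "occ_pre (grid_cells n m) pre ?T ?b" using w tw(2) unfolding occ_pre_def by blast
  ultimately show False by blast
qed

end

lemma time_cover:
  fixes tau0 t :: real
  assumes "0 \<le> tau0" "0 \<le> t"
  shows "\<exists>k. (if k = 0 then 0 else tau0 + real (k - 1) / 4) \<le> t \<and> t < tau0 + real k / 4"
proof (cases "t < tau0")
  case True
  then show ?thesis using assms by (intro exI[of _ 0]) simp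
next
  case False
  define q where "q = nat \<lfloor>4 * (t - tau0)\<rfloor>"
  have x0: "0 \<le> 4 * (t - tau0)" using False by simp
  then have "0 \<le> \<lfloor>4 * (t - tau0)\<rfloor>" by simp
  then have rq: "real q = of_int \<lfloor>4 * (t - tau0)\<rfloor>" unfolding q_def by simp
  have q1: "real q \<le> 4 * (t - tau0)" unfolding rq by linarith
  have q2: "4 * (t - tau0) < real q + 1" unfolding rq by linarith
  show ?thesis
  proof (intro exI[of _ "Suc q"])
    have a1: "tau0 + real q / 4 \<le> t" using q1 by (simp add: field_simps)
    have "real (Suc q) = real q + 1" by simp
    then have a2: "t < tau0 + real (Suc q) / 4" using q2 by (simp add: field_simps)
    show "(if Suc q = 0 then 0 else tau0 + real (Suc q - 1) / 4) \<le> t \<and> t < tau0 + real (Suc q) / 4"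
      using a1 a2 by simp
  qed
qed

theorem theorem9:
  fixes n m :: nat and r :: real and c :: "nat \<times> nat \<Rightarrow> complex"
    and f :: "nat \<times> nat \<Rightarrow> real" and g :: "nat \<times> nat \<Rightarrow> int"
    and loc pre :: "nat \<times> nat \<Rightarrow> real \<Rightarrow> (nat \<times> nat) option"
    and u w :: "nat \<times> nat" and t :: real and i j i' j' :: nat
  assumes "grid_system n m r c"
    and "partial_scs_run c r (grid_cells n m) f g loc pre"
    and "u \<in> grid_cells n m" and "w \<in> grid_cells n m" and "u \<noteq> w"
    and "starves c r (grid_cells n m) f g loc pre u"
    and "starves c r (grid_cells n m) f g loc pre w"
    and "t \<ge> 0" and "loc u t = Some (i, j)" and "loc w t = Some (i', j')"
  shows "i \<noteq> i'"
proof
  assume eq: "i = i'"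
  note gs = assms(1) and run = assms(2) and uV = assms(3) and wV = assms(4) and uw = assms(5)
    and stu = assms(6) and stw = assms(7) and t0 = assms(8) and lu = assms(9) and lw = assms(10)
  obtain c0 e \<sigma> where e0: "e \<noteq> 0" and sig: "\<sigma> = 1 \<or> \<sigma> = -1"
    and cdef: "\<forall>i j. c (i, j) = c0 + of_nat j * e + of_nat i * (\<sigma> * \<i> * e)"
    using gs unfolding grid_system_def by blast
  have adj: "\<forall>p q. comm_adj c r (grid_cells n m) p q \<longleftrightarrow>
            p \<in> grid_cells n m \<and> q \<in> grid_cells n m \<and> grid_adj p q"
    using gs unfolding grid_system_def by blast
  have sync: "sync_schedule c r (grid_cells n m) f g" using run unfolding partial_scs_run_def by blast
  have nm: "0 < n" "0 < m" using uV by (auto simp: grid_cells_def)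
  interpret G: gctx n m r c f g c0 e \<sigma>
    by (unfold_locales) (use e0 sig cdef adj sync nm in auto)
  obtain k where k: "G.TT k \<le> t" "t < G.TT (Suc k)"
    using time_cover[OF G.tau0_bounds(1) t0] unfolding G.TT_def by auto
  have cu: "seqf G.Fst u k = (i, j)" using G.traj[OF run uV stu] k t0 lu by auto
  have cw: "seqf G.Fst w k = (i', j')" using G.traj[OF run wV stw] k t0 lw by auto
  define Qr where "Qr = G.W0 + G.G * (2 * G.sb - 1)"
  define Xu where "Xu = (\<lambda>k. fst (seqf G.Fst u k))"
  define Xw where "Xw = (\<lambda>k. fst (seqf G.Fst w k))"
  define Yu where "Yu = (\<lambda>k. snd (seqf G.Fst u k))"
  define Yw where "Yw = (\<lambda>k. snd (seqf G.Fst w k))"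
  have Xur: "\<And>k. Xu (Suc k) = wstep n (Qr + int k) (Xu k)" unfolding Xu_def Qr_def by (rule G.rec_row)
  have Xwr: "\<And>k. Xw (Suc k) = wstep n (Qr + int k) (Xw k)" unfolding Xw_def Qr_def by (rule G.rec_row)
  have Yur: "\<And>k. Yu (Suc k) = wstep m (G.W0 + int k) (Yu k)" unfolding Yu_def by (rule G.rec_col)
  have Ywr: "\<And>k. Yw (Suc k) = wstep m (G.W0 + int k) (Yw k)" unfolding Yw_def by (rule G.rec_col)
  have X0: "Xu 0 < n" "Xw 0 < n" "Yu 0 < m" "Yw 0 < m"
    using uV wV unfolding Xu_def Xw_def Yu_def Yw_def by (auto simp: grid_cells_def)
  have "Xu k = Xw k" unfolding Xu_def Xw_def using cu cw eq by simp
  then have rows0: "Xu 0 = Xw 0" using walker_distinct[OF Xur X0(1) Xwr X0(2)] by blast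
  then have cols0: "Yu 0 \<noteq> Yw 0" using uw unfolding Xu_def Xw_def Yu_def Yw_def by (auto simp: prod_eq_iff)
  have rows: "\<And>k. Xu k = Xw k"
  proof -
    fix k show "Xu k = Xw k" by (induction k) (simp_all add: rows0 Xur Xwr)
  qed
  obtain k' where k': "even (G.W0 + int k')"
    "(even (int (Yu k') + (G.W0 + int k') div 2) \<and> Yw k' = Yu k' + 1) \<or>
     (even (int (Yw k') + (G.W0 + int k') div 2) \<and> Yu k' = Yw k' + 1)"
    using walker_meet[OF Yur X0(3) Ywr X0(4) cols0] by blast
  from k'(2) show False
  proof
    assume h: "even (int (Yu k') + (G.W0 + int k') div 2) \<and> Yw k' = Yu k' + 1"
    show False
      by (rule G.meet_contra[OF run uV wV stu stw _ k'(1)])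
        (use h rows[of k'] in \<open>simp_all add: Xu_def Xw_def Yu_def Yw_def\<close>)
  next
    assume h: "even (int (Yw k') + (G.W0 + int k') div 2) \<and> Yu k' = Yw k' + 1"
    show False
      by (rule G.meet_contra[OF run wV uV stw stu _ k'(1)])
        (use h rows[of k'] in \<open>simp_all add: Xu_def Xw_def Yu_def Yw_def\<close>)
  qed
qed


end
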